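(* For closed terms, the axiom system $\mathbf{BTC}$ (defined in the context) is complete with respect to the standard model: for all closed $\mathbf{BTC}$ tuplix terms $s$ and $t$, if $[\![s]\!]=[\![t]\!]$ then $\mathbf{BTC}\vdash s=t$.
   Context: Data: a meadow is a commutative ring with unit with a total unary operation $(\cdot)^{-1}$ satisfying $(u^{-1})^{-1}=u$ and $u\cdot(u\cdot u^{-1})=u$; a non-trivial cancellation meadow additionally satisfies $0\neq 1$ and the cancellation law ($u\neq 0$ and $uv=uw$ imply $v=w$). Fix such a structure $\mathcal{D}$. Data terms are built from data variables, constants $0,1$, binary $+,\cdot$ and unary $-$, $(\cdot)^{-1}$; write $p/q$ for $p\cdot q^{-1}$ and $p-q$ for $p+(-q)$. Fix a nonempty set $A$ of attributes. $\mathbf{BTC}$ tuplix terms are built from tuplix variables, constants $\epsilon$ and $\delta$, entries $a(p)$ ($a\in A$, $p$ a data term), zero tests $\gamma(p)$, and the binary operators $\oplus$ (conjunctive composition) and $+$ (alternative composition). $\mathbf{BTC}$ is the two-sorted equational proof system with axioms (T1) $x\oplus y=y\oplus x$; (T2) $(x\oplus y)\oplus z=x\oplus(y\oplus z)$; (T3) $x\oplus\epsilon=x$; (T4) $x\oplus\delta=\delta$; (T5) $a(u)\oplus a(v)=a(u+v)$; (T6) $\gamma(u)=\gamma(u/u)$; (T7) $\gamma(0)=\epsilon$; (T8) $\gamma(1)=\delta$; (T9) $\gamma(u)\oplus\gamma(v)=\gamma(u/u+v/v)$; (T10) $\gamma(u-v)\oplus a(u)=\gamma(u-v)\oplus a(v)$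 (for all $a\in A$); (C1) $x+y=y+x$; (C2) $(x+y)+z=x+(y+z)$; (C3) $x+x=x$; (C4) $x+\delta=x$; (C5) $x\oplus(y+z)=(x\oplus y)+(x\oplus z)$; (C6) $\gamma(u)+\gamma(v)=\gamma(uv)$; together with the rule (DE): for all data terms $p,q$, if $\mathcal{D}\models p=q$ then $\gamma(p)=\gamma(q)$ is derivable. Standard model: let $F$ be the set of partial functions $A\rightharpoonup\mathcal{D}$; the domain is $2^F$. For $a\in A$, $d\in\mathcal{D}$, $f_{a,d}$ is defined only at $a$ with value $d$; $f_\epsilon$ is nowhere defined. For $f,g\in F$, $f\oplus g$ is defined at $a$ iff $f$ or $g$ is, with value $f(a)$ if only $f$ is defined there, $g(a)$ if only $g$ is, and $f(a)+g(a)$ if both are. A term is closed if it contains no tuplix and no data variables; closed data terms $p$ denote elements $[\![p]\!]\in\mathcal{D}$. Closed tuplix terms are interpreted by $[\![\delta]\!]=\emptyset$, $[\![\epsilon]\!]=\{f_\epsilon\}$, $[\![a(p)]\!]=\{f_{a,[\![p]\!]}\}$, $[\![\gamma(p)]\!]=\{f_\epsilon\}$ if $[\![p]\!]=0$ and $=\emptyset$ otherwise, $[\![s\oplus t]\!]=\{f\oplus g\mid f\in[\![s]\!],g\in[\![t]\!]\}$, $[\![s+t]\!]=[\![s]\!]\cup[\![t]\!]$. *)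

theory Defs
  imports Main
begin

definition meadow :: "('d::comm_ring_1 \<Rightarrow> 'd) \<Rightarrow> bool" where
  "meadow minv \<longleftrightarrow> (\<forall>u. minv (minv u) = u) \<and> (\<forall>u. u * (u * minv u) = u)"

definition nontrivial_cancellation_meadow :: "('d::comm_ring_1 \<Rightarrow> 'd) \<Rightarrow> bool" where
  "nontrivial_cancellation_meadow minv \<longleftrightarrow>
     meadow minv \<and> (0::'d) \<noteq> 1 \<and>
     (\<forall>u v w::'d. u \<noteq> 0 \<longrightarrow> u * v = u * w \<longrightarrow> v = w)"

datatype dterm = DVar nat | DZero | DOne | DAdd dterm dterm | DMul dterm dterm
  | DNeg dterm | DInv dterm

definition dsub :: "dterm \<Rightarrow> dterm \<Rightarrow> dterm" where "dsub p q = DAdd p (DNeg q)"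
definition ddiv :: "dterm \<Rightarrow> dterm \<Rightarrow> dterm" where "ddiv p q = DMul p (DInv q)"

datatype 'a tterm = TVar nat | Eps | Delta | Entry 'a dterm | Gam dterm
  | Conj "'a tterm" "'a tterm" | Alt "'a tterm" "'a tterm"

fun deval :: "('d::comm_ring_1 \<Rightarrow> 'd) \<Rightarrow> (nat \<Rightarrow> 'd) \<Rightarrow> dterm \<Rightarrow> 'd" where
  "deval minv \<rho> (DVar n) = \<rho> n"
| "deval minv \<rho> DZero = 0"
| "deval minv \<rho> DOne = 1"
| "deval minv \<rho> (DAdd p q) = deval minv \<rho> p + deval minv \<rho> q"
| "deval minv \<rho> (DMul p q) = deval minv \<rho> p * deval minv \<rho> q"
| "deval minv \<rho> (DNeg p) = - deval minv \<rho> p"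
| "deval minv \<rho> (DInv p) = minv (deval minv \<rho> p)"

inductive btc :: "('d::comm_ring_1 \<Rightarrow> 'd) \<Rightarrow> 'a tterm \<Rightarrow> 'a tterm \<Rightarrow> bool"
  for minv :: "'d \<Rightarrow> 'd" where
  refl: "btc minv x x"
| sym: "btc minv x y \<Longrightarrow> btc minv y x"
| trans: "btc minv x y \<Longrightarrow> btc minv y z \<Longrightarrow> btc minv x z"
| cong_conj: "btc minv x x' \<Longrightarrow> btc minv y y' \<Longrightarrow> btc minv (Conj x y) (Conj x' y')"
| cong_alt: "btc minv x x' \<Longrightarrow> btc minv y y' \<Longrightarrow> btc minv (Alt x y) (Alt x' y')"
| T1: "btc minv (Conj x y) (Conj y x)"
| T2: "btc minv (Conj (Conj x y) z) (Conj x (Conj y z))"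
| T3: "btc minv (Conj x Eps) x"
| T4: "btc minv (Conj x Delta) Delta"
| T5: "btc minv (Conj (Entry a u) (Entry a v)) (Entry a (DAdd u v))"
| T6: "btc minv (Gam u) (Gam (ddiv u u))"
| T7: "btc minv (Gam DZero) Eps"
| T8: "btc minv (Gam DOne) Delta"
| T9: "btc minv (Conj (Gam u) (Gam v)) (Gam (DAdd (ddiv u u) (ddiv v v)))"
| T10: "btc minv (Conj (Gam (dsub u v)) (Entry a u)) (Conj (Gam (dsub u v)) (Entry a v))"
| C1: "btc minv (Alt x y) (Alt y x)"
| C2: "btc minv (Alt (Alt x y) z) (Alt x (Alt y z))"
| C3: "btc minv (Alt x x) x"
| C4: "btc minv (Alt x Delta) x"
| C5: "btc minv (Conj x (Alt y z)) (Alt (Conj x y) (Conj x z))"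
| C6: "btc minv (Alt (Gam u) (Gam v)) (Gam (DMul u v))"
| DE: "(\<forall>\<rho>. deval minv \<rho> p = deval minv \<rho> q) \<Longrightarrow> btc minv (Gam p) (Gam q)"

fun dclosed :: "dterm \<Rightarrow> bool" where
  "dclosed (DVar n) = False"
| "dclosed DZero = True"
| "dclosed DOne = True"
| "dclosed (DAdd p q) = (dclosed p \<and> dclosed q)"
| "dclosed (DMul p q) = (dclosed p \<and> dclosed q)"
| "dclosed (DNeg p) = dclosed p"
| "dclosed (DInv p) = dclosed p"

fun tclosed :: "'a tterm \<Rightarrow> bool" where
  "tclosed (TVar n) = False"
| "tclosed Eps = True"
| "tclosed Delta = True"
| "tclosed (Entry a p) = dclosed p"
| "tclosed (Gam p) = dclosed p"
| "tclosed (Conj s t) = (tclosed s \<and> tclosed t)"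
| "tclosed (Alt s t) = (tclosed s \<and> tclosed t)"

text \<open>Tuplices are partial functions A \<rightharpoonup> D, i.e. maps 'a \<Rightarrow> 'd option.\<close>

definition tup_oplus :: "('a \<Rightarrow> 'd::comm_ring_1 option) \<Rightarrow> ('a \<Rightarrow> 'd option) \<Rightarrow> 'a \<Rightarrow> 'd option" where
  "tup_oplus f g = (\<lambda>a. case (f a, g a) of
       (None, None) \<Rightarrow> None
     | (Some x, None) \<Rightarrow> Some x
     | (None, Some y) \<Rightarrow> Some y
     | (Some x, Some y) \<Rightarrow> Some (x + y))"

definition f_entry :: "'a \<Rightarrow> 'd \<Rightarrow> 'a \<Rightarrow> 'd option" where
  "f_entry a d = (\<lambda>b. if b = a then Some d else None)"

definition f_eps :: "'a \<Rightarrow> 'd option" where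
  "f_eps = (\<lambda>_. None)"

text \<open>Closed data terms: value under any valuation (the value does not depend on it);
  we use the constant 0 valuation.  Interpretation is only meaningful for closed terms;
  variables are given dummy values.\<close>

definition dsem :: "('d::comm_ring_1 \<Rightarrow> 'd) \<Rightarrow> dterm \<Rightarrow> 'd" where
  "dsem minv p = deval minv (\<lambda>_. 0) p"

fun tsem :: "('d::comm_ring_1 \<Rightarrow> 'd) \<Rightarrow> 'a tterm \<Rightarrow> ('a \<Rightarrow> 'd option) set" where
  "tsem minv (TVar n) = {}"
| "tsem minv Delta = {}"
| "tsem minv Eps = {f_eps}"
| "tsem minv (Entry a p) = {f_entry a (dsem minv p)}"
| "tsem minv (Gam p) = (if dsem minv p = 0 then {f_eps} else {})"
| "tsem minv (Conj s t) = {tup_oplus f g | f g. f \<in> tsem minv s \<and> g \<in> tsem minv t}"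
| "tsem minv (Alt s t) = tsem minv s \<union> tsem minv t"

end

theory Submission
  imports Defs
begin

lemma btc_trans[trans]: "btc minv x y \<Longrightarrow> btc minv y z \<Longrightarrow> btc minv x z"
  by (rule btc.trans)

lemma btc_lcomm: "btc minv (Conj x (Conj y z)) (Conj y (Conj x z))"
proof -
  have "btc minv (Conj x (Conj y z)) (Conj (Conj x y) z)" by (rule btc.sym, rule btc.T2)
  also have "btc minv \<dots> (Conj (Conj y x) z)" by (rule btc.cong_conj, rule btc.T1, rule btc.refl)
  also have "btc minv \<dots> (Conj y (Conj x z))" by (rule btc.T2)
  finally show ?thesis .
qed

fun conjL :: "('a \<times> dterm) list \<Rightarrow> 'a tterm" where
  "conjL [] = Eps"
| "conjL (x#xs) = Conj (Entry (fst x) (snd x)) (conjL xs)"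

fun altL :: "('a \<times> dterm) list list \<Rightarrow> 'a tterm" where
  "altL [] = Delta"
| "altL (m#ms) = Alt (conjL m) (altL ms)"

lemma conjL_append: "btc minv (conjL (m1 @ m2)) (Conj (conjL m1) (conjL m2))"
proof (induction m1)
  case Nil
  have "btc minv (conjL m2) (Conj (conjL m2) Eps)" by (rule btc.sym, rule btc.T3)
  also have "btc minv \<dots> (Conj Eps (conjL m2))" by (rule btc.T1)
  finally show ?case by simp
next
  case (Cons x m)
  have "btc minv (conjL ((x#m) @ m2)) (Conj (Entry (fst x) (snd x)) (Conj (conjL m) (conjL m2)))"
    using Cons by (simp add: btc.cong_conj btc.refl)
  also have "btc minv \<dots> (Conj (conjL (x#m)) (conjL m2))" by (simp, rule btc.sym, rule btc.T2)
  finally show ?case .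
qed

lemma conjL_move: "btc minv (conjL (m0 @ x # m1)) (Conj (Entry (fst x) (snd x)) (conjL (m0 @ m1)))"
proof (induction m0)
  case Nil
  then show ?case by (simp add: btc.refl)
next
  case (Cons y m)
  have "btc minv (conjL ((y#m) @ x # m1)) (Conj (Entry (fst y) (snd y)) (Conj (Entry (fst x) (snd x)) (conjL (m @ m1))))"
    using Cons by (simp add: btc.cong_conj btc.refl)
  also have "btc minv \<dots> (Conj (Entry (fst x) (snd x)) (conjL ((y#m) @ m1)))" by (simp add: btc_lcomm)
  finally show ?case .
qed

lemma altL_append: "btc minv (altL (ms1 @ ms2)) (Alt (altL ms1) (altL ms2))"
proof (induction ms1)
  case Nil
  have "btc minv (altL ms2) (Alt (altL ms2) Delta)" by (rule btc.sym, rule btc.C4)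
  also have "btc minv \<dots> (Alt Delta (altL ms2))" by (rule btc.C1)
  finally show ?case by simp
next
  case (Cons m r)
  have "btc minv (altL ((m#r) @ ms2)) (Alt (conjL m) (Alt (altL r) (altL ms2)))"
    using Cons by (simp add: btc.cong_alt btc.refl)
  also have "btc minv \<dots> (Alt (altL (m#r)) (altL ms2))" by (simp, rule btc.sym, rule btc.C2)
  finally show ?case .
qed

lemma conj_altL_right: "btc minv (Conj X (altL ms)) (altL (map (\<lambda>m2. m @ m2) ms))"
  if "btc minv X (conjL m)"
proof (induction ms)
  case Nil
  then show ?case by (simp add: btc.T4)
next
  case (Cons m2 r)
  have "btc minv (Conj X (altL (m2#r))) (Alt (Conj X (conjL m2)) (Conj X (altL r)))"
    by (simp add: btc.C5)
  also have "btc minv \<dots> (Alt (conjL (m @ m2)) (altL (map (\<lambda>m2. m @ m2) r)))"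
  proof (rule btc.cong_alt[OF _ Cons])
    have "btc minv (Conj X (conjL m2)) (Conj (conjL m) (conjL m2))"
      using that by (simp add: btc.cong_conj btc.refl)
    also have "btc minv \<dots> (conjL (m @ m2))" by (rule btc.sym, rule conjL_append)
    finally show "btc minv (Conj X (conjL m2)) (conjL (m @ m2))" .
  qed
  finally show ?case by simp
qed

definition prodL :: "('a \<times> dterm) list list \<Rightarrow> ('a \<times> dterm) list list \<Rightarrow> ('a \<times> dterm) list list" where
  "prodL ms1 ms2 = concat (map (\<lambda>m1. map (\<lambda>m2. m1 @ m2) ms2) ms1)"

lemma conj_altL: "btc minv (Conj (altL ms1) (altL ms2)) (altL (prodL ms1 ms2))"
proof (induction ms1)
  case Nil
  have "btc minv (Conj Delta (altL ms2)) (Conj (altL ms2) Delta)" by (rule btc.T1)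
  also have "btc minv \<dots> Delta" by (rule btc.T4)
  finally show ?case by (simp add: prodL_def)
next
  case (Cons m r)
  let ?Y = "altL ms2"
  have "btc minv (Conj (altL (m#r)) ?Y) (Conj ?Y (Alt (conjL m) (altL r)))" by (simp add: btc.T1)
  also have "btc minv \<dots> (Alt (Conj ?Y (conjL m)) (Conj ?Y (altL r)))" by (rule btc.C5)
  also have "btc minv \<dots> (Alt (Conj (conjL m) ?Y) (Conj (altL r) ?Y))"
    by (rule btc.cong_alt; rule btc.T1)
  also have "btc minv \<dots> (Alt (altL (map (\<lambda>m2. m @ m2) ms2)) (altL (prodL r ms2)))"
    by (rule btc.cong_alt[OF conj_altL_right[OF btc.refl] Cons])
  also have "btc minv \<dots> (altL (map (\<lambda>m2. m @ m2) ms2 @ prodL r ms2))"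
    by (rule btc.sym, rule altL_append)
  finally show ?case by (simp add: prodL_def)
qed


lemma tup_oplus_eps[simp]: "tup_oplus f f_eps = f" "tup_oplus f_eps f = f"
  by (auto simp: tup_oplus_def f_eps_def fun_eq_iff split: option.splits)

lemma tup_oplus_assoc: "tup_oplus (tup_oplus f g) h = tup_oplus f (tup_oplus g h)"
  by (auto simp: tup_oplus_def fun_eq_iff add.assoc split: option.splits)

fun msem :: "('d::comm_ring_1 \<Rightarrow> 'd) \<Rightarrow> ('a \<times> dterm) list \<Rightarrow> 'a \<Rightarrow> 'd option" where
  "msem minv [] = f_eps"
| "msem minv (x#xs) = tup_oplus (f_entry (fst x) (dsem minv (snd x))) (msem minv xs)"

lemma msem_append: "msem minv (m1 @ m2) = tup_oplus (msem minv m1) (msem minv m2)"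
  by (induction m1) (auto simp: tup_oplus_assoc)

definition vl :: "('d::comm_ring_1 \<Rightarrow> 'd) \<Rightarrow> 'a \<Rightarrow> ('a \<times> dterm) list \<Rightarrow> 'd" where
  "vl minv b m = sum_list (map (\<lambda>x. dsem minv (snd x)) (filter (\<lambda>x. fst x = b) m))"

lemma vl_simps[simp]: "vl minv b [] = 0"
  "vl minv b (x#xs) = (if fst x = b then dsem minv (snd x) + vl minv b xs else vl minv b xs)"
  "vl minv b (m1 @ m2) = vl minv b m1 + vl minv b m2"
  by (auto simp: vl_def)

lemma vl_notin: "b \<notin> fst ` set m \<Longrightarrow> vl minv b m = 0"
  by (induction m) auto

lemma msem_char: "msem minv m b = (if b \<in> fst ` set m then Some (vl minv b m) else None)"
  by (induction m) (auto simp: tup_oplus_def f_entry_def f_eps_def vl_notin split: option.splits)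

lemma msem_eq_iff: "msem minv m1 = msem minv m2 \<longleftrightarrow>
   (fst ` set m1 = fst ` set m2 \<and> (\<forall>b\<in>fst ` set m1. vl minv b m1 = vl minv b m2))"
proof
  assume h: "msem minv m1 = msem minv m2"
  have 1: "fst ` set m1 = fst ` set m2"
  proof (rule set_eqI)
    fix b from h have "msem minv m1 b = msem minv m2 b" by simp
    then show "b \<in> fst ` set m1 \<longleftrightarrow> b \<in> fst ` set m2" by (simp add: msem_char split: if_splits)
  qed
  moreover have "\<forall>b\<in>fst ` set m1. vl minv b m1 = vl minv b m2"
  proof
    fix b assume "b \<in> fst ` set m1"
    moreover from h have "msem minv m1 b = msem minv m2 b" by simp
    ultimately show "vl minv b m1 = vl minv b m2" using 1 by (simp add: msem_char)
  qed
  ultimately show "fst ` set m1 = fst ` set m2 \<and> (\<forall>b\<in>fst ` set m1. vl minv b m1 = vl minv b m2)" ..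
next
  assume "fst ` set m1 = fst ` set m2 \<and> (\<forall>b\<in>fst ` set m1. vl minv b m1 = vl minv b m2)"
  then show "msem minv m1 = msem minv m2" unfolding fun_eq_iff msem_char by metis
qed

lemma vl_filter: "b \<noteq> a \<Longrightarrow> vl minv b (filter (\<lambda>y. fst y \<noteq> a) m) = vl minv b m"
  by (induction m) auto

lemma msem_filter: "msem minv m1 = msem minv m2 \<Longrightarrow>
   msem minv (filter (\<lambda>y. fst y \<noteq> a) m1) = msem minv (filter (\<lambda>y. fst y \<noteq> a) m2)"
  unfolding msem_eq_iff by (auto simp: vl_filter image_iff)


lemma deval_closed: "dclosed p \<Longrightarrow> deval minv \<rho> p = dsem minv p"
  unfolding dsem_def by (induction p) auto

lemma entry_eq:
  assumes "dclosed p" "dclosed q" "dsem minv p = dsem minv q"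
  shows "btc minv (Entry a p) (Entry a q)"
proof -
  have g: "btc minv (Gam (dsub p q)) Eps"
  proof -
    have "btc minv (Gam (dsub p q)) (Gam DZero)"
      by (rule btc.DE) (simp add: dsub_def deval_closed assms)
    also have "btc minv \<dots> Eps" by (rule btc.T7)
    finally show ?thesis .
  qed
  have e: "btc minv (Entry a x) (Conj (Gam (dsub p q)) (Entry a x))" for x
  proof -
    have "btc minv (Entry a x) (Conj (Entry a x) Eps)" by (rule btc.sym, rule btc.T3)
    also have "btc minv \<dots> (Conj Eps (Entry a x))" by (rule btc.T1)
    also have "btc minv \<dots> (Conj (Gam (dsub p q)) (Entry a x))"
      by (rule btc.cong_conj[OF btc.sym[OF g] btc.refl])
    finally show ?thesis .
  qed
  have "btc minv (Entry a p) (Conj (Gam (dsub p q)) (Entry a p))" by (rule e)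
  also have "btc minv \<dots> (Conj (Gam (dsub p q)) (Entry a q))" by (rule btc.T10)
  also have "btc minv \<dots> (Entry a q)" by (rule btc.sym, rule e)
  finally show ?thesis .
qed

fun sumt :: "dterm \<Rightarrow> 'a \<Rightarrow> ('a \<times> dterm) list \<Rightarrow> dterm" where
  "sumt q a [] = q"
| "sumt q a (x#xs) = (if fst x = a then sumt (DAdd q (snd x)) a xs else sumt q a xs)"

definition mcl :: "('a \<times> dterm) list \<Rightarrow> bool" where
  "mcl m \<longleftrightarrow> (\<forall>x\<in>set m. dclosed (snd x))"

lemma sumt_sem: "dsem minv (sumt q a m) = dsem minv q + vl minv a m"
  by (induction m arbitrary: q) (auto simp: dsem_def algebra_simps)

lemma sumt_closed: "dclosed q \<Longrightarrow> mcl m \<Longrightarrow> dclosed (sumt q a m)"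
  by (induction m arbitrary: q) (auto simp: mcl_def)

lemma gather: "btc minv (Conj (Entry a q) (conjL m))
   (Conj (Entry a (sumt q a m)) (conjL (filter (\<lambda>y. fst y \<noteq> a) m)))"
proof (induction m arbitrary: q)
  case Nil
  then show ?case by (simp add: btc.refl)
next
  case (Cons x xs)
  show ?case
  proof (cases "fst x = a")
    case True
    have "btc minv (Conj (Entry a q) (conjL (x#xs))) (Conj (Conj (Entry a q) (Entry a (snd x))) (conjL xs))"
      using btc.sym[OF btc.T2[of minv "Entry a q" "Entry a (snd x)" "conjL xs"]] True by simp
    also have "btc minv \<dots> (Conj (Entry a (DAdd q (snd x))) (conjL xs))"
      by (rule btc.cong_conj[OF btc.T5 btc.refl])
    also have "btc minv \<dots> (Conj (Entry a (sumt (DAdd q (snd x)) a xs)) (conjL (filter (\<lambda>y. fst y \<noteq> a) xs)))"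
      by (rule Cons)
    finally show ?thesis using True by simp
  next
    case False
    have "btc minv (Conj (Entry a q) (conjL (x#xs))) (Conj (Entry (fst x) (snd x)) (Conj (Entry a q) (conjL xs)))"
      by (simp add: btc_lcomm)
    also have "btc minv \<dots> (Conj (Entry (fst x) (snd x)) (Conj (Entry a (sumt q a xs)) (conjL (filter (\<lambda>y. fst y \<noteq> a) xs))))"
      by (rule btc.cong_conj[OF btc.refl Cons])
    also have "btc minv \<dots> (Conj (Entry a (sumt q a xs)) (Conj (Entry (fst x) (snd x)) (conjL (filter (\<lambda>y. fst y \<noteq> a) xs))))"
      by (rule btc_lcomm)
    finally show ?thesis using False by simp
  qed
qed

lemma mono_eq:
  "mcl m1 \<Longrightarrow> mcl m2 \<Longrightarrow> msem minv m1 = msem minv m2 \<Longrightarrow> btc minv (conjL m1) (conjL m2)"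
proof (induction "length m1" arbitrary: m1 m2 rule: less_induct)
  case less
  show ?case
  proof (cases m1)
    case Nil
    then have "m2 = []" using less.prems(3) unfolding msem_eq_iff by simp
    then show ?thesis using Nil by (simp add: btc.refl)
  next
    case (Cons y r)
    obtain a q where y: "y = (a, q)" by force
    have "a \<in> fst ` set m2" using less.prems(3) unfolding msem_eq_iff using Cons y by force
    then obtain x where x: "x \<in> set m2" "fst x = a" by auto
    then obtain m0 r2 where m2: "m2 = m0 @ x # r2" by (metis split_list)
    let ?F = "filter (\<lambda>y. fst y \<noteq> a)"
    have f2: "?F m2 = ?F (m0 @ r2)" using m2 x by simp
    have f1: "?F m1 = ?F r" using Cons y by simp
    have "btc minv (conjL m1) (Conj (Entry a (sumt q a r)) (conjL (?F r)))"
      using gather[of minv a q r] Cons y by simp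
    also have "btc minv \<dots> (Conj (Entry a (sumt (snd x) a (m0 @ r2))) (conjL (?F m2)))"
    proof (rule btc.cong_conj)
      show "btc minv (Entry a (sumt q a r)) (Entry a (sumt (snd x) a (m0 @ r2)))"
      proof (rule entry_eq)
        show "dclosed (sumt q a r)" using less.prems(1) Cons y
          by (intro sumt_closed) (auto simp: mcl_def)
        show "dclosed (sumt (snd x) a (m0 @ r2))" using less.prems(2) m2
          by (intro sumt_closed) (auto simp: mcl_def)
        have "vl minv a m1 = vl minv a m2" using less.prems(3) Cons y unfolding msem_eq_iff by auto
        then show "dsem minv (sumt q a r) = dsem minv (sumt (snd x) a (m0 @ r2))"
          using Cons y m2 x by (simp add: sumt_sem algebra_simps)
      qed
      show "btc minv (conjL (?F r)) (conjL (?F m2))"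
      proof (rule less.hyps)
        show "length (?F r) < length m1" using Cons
          by (simp add: le_imp_less_Suc)
        show "mcl (?F r)" using less.prems(1) Cons by (auto simp: mcl_def)
        show "mcl (?F m2)" using less.prems(2) by (auto simp: mcl_def)
        show "msem minv (?F r) = msem minv (?F m2)"
          using msem_filter[OF less.prems(3), of a] f1 by simp
      qed
    qed
    also have "btc minv \<dots> (Conj (Entry (fst x) (snd x)) (conjL (m0 @ r2)))"
      using btc.sym[OF gather[of minv a "snd x" "m0 @ r2"]] f2 x by simp
    also have "btc minv \<dots> (conjL m2)"
      using btc.sym[OF conjL_move[of minv m0 x r2]] m2 by simp
    finally show ?thesis .
  qed
qed


lemma absorb: "btc minv X (conjL m') \<Longrightarrow> m' \<in> set ms \<Longrightarrow> btc minv (Alt (altL ms) X) (altL ms)"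
proof (induction ms)
  case Nil
  then show ?case by simp
next
  case (Cons m r)
  show ?case
  proof (cases "m' = m")
    case True
    let ?C = "conjL m" and ?R = "altL r"
    have "btc minv (Alt (altL (m#r)) X) (Alt X (Alt ?C ?R))" by (simp add: btc.C1)
    also have "btc minv \<dots> (Alt (Alt X ?C) ?R)" by (rule btc.sym, rule btc.C2)
    also have "btc minv \<dots> (Alt (Alt ?C ?C) ?R)"
      using Cons.prems True by (intro btc.cong_alt btc.refl) auto
    also have "btc minv \<dots> (Alt ?C ?R)" by (rule btc.cong_alt[OF btc.C3 btc.refl])
    finally show ?thesis by simp
  next
    case False
    then have "m' \<in> set r" using Cons.prems by simp
    have "btc minv (Alt (altL (m#r)) X) (Alt (conjL m) (Alt (altL r) X))" by (simp add: btc.C2)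
    also have "btc minv \<dots> (Alt (conjL m) (altL r))"
      by (rule btc.cong_alt[OF btc.refl Cons.IH[OF Cons.prems(1) \<open>m' \<in> set r\<close>]])
    finally show ?thesis by simp
  qed
qed

lemma absorb_all: "\<forall>m\<in>set ms2. \<exists>m'\<in>set ms1. btc minv (conjL m) (conjL m') \<Longrightarrow>
   btc minv (Alt (altL ms1) (altL ms2)) (altL ms1)"
proof (induction ms2)
  case Nil
  then show ?case by (simp add: btc.C4)
next
  case (Cons m r)
  then obtain m' where m': "m' \<in> set ms1" "btc minv (conjL m) (conjL m')" by auto
  have "btc minv (Alt (altL ms1) (altL (m#r))) (Alt (Alt (altL ms1) (conjL m)) (altL r))"
    by (simp, rule btc.sym, rule btc.C2)
  also have "btc minv \<dots> (Alt (altL ms1) (altL r))"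
    by (rule btc.cong_alt[OF absorb[OF m'(2) m'(1)] btc.refl])
  also have "btc minv \<dots> (altL ms1)" using Cons by simp
  finally show ?case .
qed

section \<open>Normal forms\<close>

lemma meadow_inv:
  fixes minv :: "'d::comm_ring_1 \<Rightarrow> 'd"
  assumes "nontrivial_cancellation_meadow minv" "v \<noteq> 0"
  shows "v * minv v = 1"
proof -
  from assms(1) have m: "\<forall>u. u * (u * minv u) = u"
    unfolding nontrivial_cancellation_meadow_def meadow_def by blast
  from assms(1) have c: "\<forall>(u::'d) v w. u \<noteq> 0 \<longrightarrow> u * v = u * w \<longrightarrow> v = w"
    unfolding nontrivial_cancellation_meadow_def by blast
  have "v * (v * minv v) = v * 1" using m by simp
  then show ?thesis using c assms(2) by blast
qed

lemma normal_form:
  assumes ncm: "nontrivial_cancellation_meadow minv"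
  shows "tclosed s \<Longrightarrow> \<exists>ms. (\<forall>m\<in>set ms. mcl m) \<and> btc minv s (altL ms) \<and> tsem minv s = msem minv ` set ms"
proof (induction s)
  case (TVar n)
  then show ?case by simp
next
  case Eps
  show ?case
    by (rule exI[of _ "[[]]"]) (auto simp: mcl_def intro: btc.sym btc.C4)
next
  case Delta
  show ?case by (rule exI[of _ "[]"]) (auto intro: btc.refl)
next
  case (Entry a p)
  have "btc minv (Entry a p) (Conj (Entry a p) Eps)" by (rule btc.sym, rule btc.T3)
  also have "btc minv \<dots> (Alt (Conj (Entry a p) Eps) Delta)" by (rule btc.sym, rule btc.C4)
  finally have "btc minv (Entry a p) (altL [[(a,p)]])" by simp
  then show ?case using Entry by (intro exI[of _ "[[(a,p)]]"]) (auto simp: mcl_def)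
next
  case (Gam p)
  have dp: "dclosed p" using Gam by simp
  show ?case
  proof (cases "dsem minv p = 0")
    case True
    have "btc minv (Gam p) (Gam DZero)" by (rule btc.DE) (simp add: deval_closed dp True)
    also have "btc minv \<dots> Eps" by (rule btc.T7)
    also have "btc minv \<dots> (Alt Eps Delta)" by (rule btc.sym, rule btc.C4)
    finally have "btc minv (Gam p) (altL [[]])" by simp
    then show ?thesis using True by (intro exI[of _ "[[]]"]) (auto simp: mcl_def)
  next
    case False
    have "btc minv (Gam p) (Gam (ddiv p p))" by (rule btc.T6)
    also have "btc minv \<dots> (Gam DOne)" by (rule btc.DE) (simp add: ddiv_def deval_closed dp meadow_inv[OF ncm False])
    also have "btc minv \<dots> Delta" by (rule btc.T8)
    finally have "btc minv (Gam p) (altL [])" by simp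
    then show ?thesis using False by (intro exI[of _ "[]"]) auto
  qed
next
  case (Conj s t)
  then obtain ms1 ms2 where h1: "\<forall>m\<in>set ms1. mcl m" "btc minv s (altL ms1)" "tsem minv s = msem minv ` set ms1"
    and h2: "\<forall>m\<in>set ms2. mcl m" "btc minv t (altL ms2)" "tsem minv t = msem minv ` set ms2" by auto
  have "btc minv (Conj s t) (altL (prodL ms1 ms2))"
    using btc.cong_conj[OF h1(2) h2(2)] conj_altL btc.trans by blast
  moreover have "\<forall>m\<in>set (prodL ms1 ms2). mcl m" using h1(1) h2(1) by (auto simp: prodL_def mcl_def)
  moreover have "tsem minv (Conj s t) = msem minv ` set (prodL ms1 ms2)"
  proof
    show "tsem minv (Conj s t) \<subseteq> msem minv ` set (prodL ms1 ms2)"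
    proof
      fix h assume "h \<in> tsem minv (Conj s t)"
      then obtain m1 m2 where mm: "m1 \<in> set ms1" "m2 \<in> set ms2" "h = tup_oplus (msem minv m1) (msem minv m2)"
        using h1(3) h2(3) by auto
      have "m1 @ m2 \<in> set (prodL ms1 ms2)" using mm by (auto simp: prodL_def)
      moreover have "h = msem minv (m1 @ m2)" using mm by (simp add: msem_append)
      ultimately show "h \<in> msem minv ` set (prodL ms1 ms2)" by (rule rev_image_eqI)
    qed
    show "msem minv ` set (prodL ms1 ms2) \<subseteq> tsem minv (Conj s t)"
    proof
      fix h assume "h \<in> msem minv ` set (prodL ms1 ms2)"
      then obtain m where m: "m \<in> set (prodL ms1 ms2)" "h = msem minv m" by blast
      then obtain m1 m2 where mm: "m1 \<in> set ms1" "m2 \<in> set ms2" "m = m1 @ m2"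
        by (auto simp: prodL_def)
      have "h = tup_oplus (msem minv m1) (msem minv m2)" using m mm by (simp add: msem_append)
      moreover have "msem minv m1 \<in> tsem minv s" "msem minv m2 \<in> tsem minv t"
        using mm h1(3) h2(3) by auto
      ultimately show "h \<in> tsem minv (Conj s t)" by auto
    qed
  qed
  ultimately show ?case by blast
next
  case (Alt s t)
  then obtain ms1 ms2 where h1: "\<forall>m\<in>set ms1. mcl m" "btc minv s (altL ms1)" "tsem minv s = msem minv ` set ms1"
    and h2: "\<forall>m\<in>set ms2. mcl m" "btc minv t (altL ms2)" "tsem minv t = msem minv ` set ms2" by auto
  have "btc minv (Alt s t) (altL (ms1 @ ms2))"
    using btc.cong_alt[OF h1(2) h2(2)] altL_append btc.trans btc.sym by blast
  then show ?case using h1 h2 by (intro exI[of _ "ms1 @ ms2"]) (auto simp: image_Un)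
qed

theorem theorem2:
  fixes minv :: "'d::comm_ring_1 \<Rightarrow> 'd" and s t :: "'a tterm"
  assumes "nontrivial_cancellation_meadow minv"
    and "tclosed s" and "tclosed t"
    and "tsem minv s = tsem minv t"
  shows "btc minv s t"
proof -
  obtain ms1 where h1: "\<forall>m\<in>set ms1. mcl m" "btc minv s (altL ms1)" "tsem minv s = msem minv ` set ms1"
    using normal_form[OF assms(1) assms(2)] by blast
  obtain ms2 where h2: "\<forall>m\<in>set ms2. mcl m" "btc minv t (altL ms2)" "tsem minv t = msem minv ` set ms2"
    using normal_form[OF assms(1) assms(3)] by blast
  have img: "msem minv ` set ms1 = msem minv ` set ms2" using h1(3) h2(3) assms(4) by simp
  have c21: "\<forall>m\<in>set ms2. \<exists>m'\<in>set ms1. btc minv (conjL m) (conjL m')"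
  proof
    fix m assume m: "m \<in> set ms2"
    then have "msem minv m \<in> msem minv ` set ms1" using img by auto
    then obtain m' where "m' \<in> set ms1" "msem minv m = msem minv m'" by auto
    then show "\<exists>m'\<in>set ms1. btc minv (conjL m) (conjL m')"
      using mono_eq h1(1) h2(1) m by blast
  qed
  have c12: "\<forall>m\<in>set ms1. \<exists>m'\<in>set ms2. btc minv (conjL m) (conjL m')"
  proof
    fix m assume m: "m \<in> set ms1"
    then have "msem minv m \<in> msem minv ` set ms2" using img by auto
    then obtain m' where "m' \<in> set ms2" "msem minv m = msem minv m'" by auto
    then show "\<exists>m'\<in>set ms2. btc minv (conjL m) (conjL m')"
      using mono_eq h1(1) h2(1) m by blast
  qed
  have "btc minv s (altL ms1)" by (rule h1(2))
  also have "btc minv \<dots> (Alt (altL ms1) (altL ms2))" by (rule btc.sym, rule absorb_all[OF c21])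
  also have "btc minv \<dots> (Alt (altL ms2) (altL ms1))" by (rule btc.C1)
  also have "btc minv \<dots> (altL ms2)" by (rule absorb_all[OF c12])
  also have "btc minv \<dots> t" by (rule btc.sym, rule h2(2))
  finally show ?thesis .
qed

end
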